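(* Let $L_\pi,L_Q,\sigma>0$ and consider the MDP with $\mathcal S=\mathcal A=\mathbb R$, transitions $s'=s+a/L_\pi+\epsilon$ with $\epsilon\sim\mathcal N(0,\sigma^2)$ i.i.d., reward $\mathcal R(s,a)=-L_QL_\pi\,|s+a/L_\pi|$ and discount $\gamma\in(0,1)$. Let $0\le\Delta^\tau<\Delta$ be integers, and let $V_{( * )}$ and $V^\tau_{( * )}$ be the optimal value functions of the $\Delta$-CDMDP and the $\Delta^\tau$-CDMDP of this MDP, respectively. Then for every $x_t\in\mathcal X$, $$I(x_t):=\mathbb E_{x^\tau_t\sim b_\Delta(\cdot|x_t)}\big[V^\tau_{( * )}(x^\tau_t)\big]-V_{( * )}(x_t)=\frac{L_QL_\pi}{1-\gamma}\,\sigma\,\sqrt{\frac{2}{\pi}}\,\big(\sqrt{\Delta}-\sqrt{\Delta^\tau}\big),$$ where $\pi$ here denotes the number $3.14159\ldots$.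
   Context: For an MDP with state space $\mathcal S$, action space $\mathcal A$, transition kernel $\mathcal P$, reward $\mathcal R$ and discount $\gamma$, and a delay $\Delta\in\mathbb N$, the augmented state space is $\mathcal X=\mathcal S\times\mathcal A^\Delta$ with elements $x_t=(s_{t-\Delta},a_{t-\Delta},\dots,a_{t-1})$. The constant delayed MDP (CDMDP) with delay $\Delta$ has transition kernel $\mathcal P_\Delta(\cdot|x_t,a_t)$: the next augmented state is $x_{t+1}=(s_{t-\Delta+1},a_{t-\Delta+1},\dots,a_{t-1},a_t)$ with $s_{t-\Delta+1}\sim\mathcal P(\cdot|s_{t-\Delta},a_{t-\Delta})$; its reward is $\mathcal R_\Delta(x_t,a_t)=\mathbb E_{s_t\sim b(\cdot|x_t)}[\mathcal R(s_t,a_t)]$, where $b(\cdot|x_t)$ is the law of $s_t$ obtained from $s_{t-\Delta}$ by successively sampling $s_{t-\Delta+i+1}\sim\mathcal P(\cdot|s_{t-\Delta+i},a_{t-\Delta+i})$ for $i=0,\dots,\Delta-1$. The optimal value function is the supremum over policies on $\mathcal X$ of the expected infinite-horizon discounted sum of $\mathcal R_\Delta$. For $\Delta^\tau<\Delta$, the $\Delta^\tau$-CDMDP is defined in the same way on $\mathcal X^\tau=\mathcal S\times\mathcal A^{\Delta^\tau}$ (for $\Delta^\tau=0$ it is the original MDP). The delayed belief $b_\Delta(\cdot|x_t)$ is the distribution on $\mathcal X^\tau$ of $x^\tau_t=(s_{t-\Delta^\tau},a_{t-\Delta^\tau},\dots,a_{t-1})$, where the actions are copied from $x_t$ and $s_{t-\Delta^\tau}$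 is obtained from $s_{t-\Delta}$ by successively sampling $s_{t-\Delta+i+1}\sim\mathcal P(\cdot|s_{t-\Delta+i},a_{t-\Delta+i})$ for $i=0,\dots,\Delta-\Delta^\tau-1$. *)

theory Defs
  imports "HOL-Probability.Probability"
begin

type_synonym aug_state = "real \<times> (nat \<Rightarrow> real)"
  (* (s_{t-d}, as) with as i = a_{t-d+i} for i < d, and as i = undefined for i \<ge> d *)

definition base_trans :: "real \<Rightarrow> real \<Rightarrow> real \<Rightarrow> real \<Rightarrow> real measure" where
  "base_trans Lpi sig s a = density lborel (normal_density (s + a / Lpi) sig)"

definition base_reward :: "real \<Rightarrow> real \<Rightarrow> real \<Rightarrow> real \<Rightarrow> real" where
  "base_reward Lpi LQ s a = - (LQ * Lpi * \<bar>s + a / Lpi\<bar>)"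

fun iter_trans :: "real \<Rightarrow> real \<Rightarrow> nat \<Rightarrow> (nat \<Rightarrow> real) \<Rightarrow> real \<Rightarrow> real measure" where
  "iter_trans Lpi sig 0 as s = return borel s"
| "iter_trans Lpi sig (Suc k) as s =
     bind (iter_trans Lpi sig k as s) (\<lambda>s'. base_trans Lpi sig s' (as k))"

definition aug_space :: "nat \<Rightarrow> aug_state measure" where
  "aug_space d = pair_measure (borel :: real measure) (PiM {..<d} (\<lambda>_. (borel :: real measure)))"

definition cd_reward :: "real \<Rightarrow> real \<Rightarrow> real \<Rightarrow> nat \<Rightarrow> aug_state \<Rightarrow> real \<Rightarrow> real" where
  "cd_reward Lpi LQ sig d x a =
     integral\<^sup>L (iter_trans Lpi sig d (snd x) (fst x)) (\<lambda>s. base_reward Lpi LQ s a)"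

definition cd_trans :: "real \<Rightarrow> real \<Rightarrow> nat \<Rightarrow> aug_state \<Rightarrow> real \<Rightarrow> aug_state measure" where
  "cd_trans Lpi sig d x a =
     distr (base_trans Lpi sig (fst x) (if d = 0 then a else snd x 0)) (aug_space d)
       (\<lambda>s'. (s', \<lambda>i. if Suc i < d then snd x (Suc i) else if Suc i = d then a else undefined))"

definition cd_policies :: "nat \<Rightarrow> (aug_state \<Rightarrow> real measure) set" where
  "cd_policies d = {p. p \<in> aug_space d \<rightarrow>\<^sub>M prob_algebra (borel :: real measure)}"

fun cd_marg :: "real \<Rightarrow> real \<Rightarrow> nat \<Rightarrow> (aug_state \<Rightarrow> real measure) \<Rightarrow> aug_state \<Rightarrow> nat \<Rightarrow> aug_state measure" where
  "cd_marg Lpi sig d p x 0 = return (aug_space d) x"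
| "cd_marg Lpi sig d p x (Suc t) =
     bind (cd_marg Lpi sig d p x t) (\<lambda>y. bind (p y) (\<lambda>a. cd_trans Lpi sig d y a))"

text \<open>Value of policy p: expected discounted sum of (non-positive) rewards, sum_t gamma^t E[R_d(x_t,a_t)],
  evaluated as an extended real (rewards are non-positive, so the value lies in [-infinity, 0]).\<close>
definition cd_value :: "real \<Rightarrow> real \<Rightarrow> real \<Rightarrow> real \<Rightarrow> nat \<Rightarrow> (aug_state \<Rightarrow> real measure) \<Rightarrow> aug_state \<Rightarrow> ereal" where
  "cd_value Lpi LQ sig gamma d p x =
     - enn2ereal (\<Sum>t. ennreal (gamma ^ t) *
         (\<integral>\<^sup>+ y. \<integral>\<^sup>+ a. ennreal (- cd_reward Lpi LQ sig d y a) \<partial>(p y) \<partial>(cd_marg Lpi sig d p x t)))"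

definition cd_opt_value :: "real \<Rightarrow> real \<Rightarrow> real \<Rightarrow> real \<Rightarrow> nat \<Rightarrow> aug_state \<Rightarrow> ereal" where
  "cd_opt_value Lpi LQ sig gamma d x = (SUP p \<in> cd_policies d. cd_value Lpi LQ sig gamma d p x)"

definition delayed_belief :: "real \<Rightarrow> real \<Rightarrow> nat \<Rightarrow> nat \<Rightarrow> aug_state \<Rightarrow> aug_state measure" where
  "delayed_belief Lpi sig D dt x =
     distr (iter_trans Lpi sig (D - dt) (snd x) (fst x)) (aug_space dt)
       (\<lambda>s'. (s', \<lambda>i. if i < dt then snd x (i + (D - dt)) else undefined))"

definition exp_nonpos :: "'a measure \<Rightarrow> ('a \<Rightarrow> ereal) \<Rightarrow> ereal" where
  "exp_nonpos M f = - enn2ereal (\<integral>\<^sup>+ y. e2ennreal (- f y) \<partial>M)"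

end

theory Submission imports Defs begin


lemma normal_density_shift: "normal_density m s (m + x) = normal_density 0 s x"
  by (simp add: normal_density_def)

lemma density_normal_shift:
  "density lborel (normal_density m s) = distr (density lborel (normal_density 0 s)) borel (\<lambda>e. m + e)"
proof -
  have "distr (density lborel (normal_density 0 s)) borel (\<lambda>e. m + e)
      = distr (density lborel (\<lambda>e. ennreal (normal_density m s (m + e)))) borel (\<lambda>e. m + e)"
    by (simp add: normal_density_shift)
  also have "\<dots> = density (distr lborel borel (\<lambda>e. m + e)) (\<lambda>x. ennreal (normal_density m s x))"
    by (rule density_distr[symmetric]) auto
  also have "distr lborel borel (\<lambda>e. m + e) = lborel"
    using lborel_distr_plus[of m] by simp
  finally show ?thesis by simp
qed

lemma base_trans_distr:
  "base_trans Lpi sig s a = distr (density lborel (normal_density 0 sig)) borel (\<lambda>e. s + a / Lpi + e)"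
  unfolding base_trans_def by (rule density_normal_shift)

lemma N0_prob: "0 < sig \<Longrightarrow> density lborel (normal_density 0 sig) \<in> space (prob_algebra borel)"
  by (auto simp: space_prob_algebra prob_space_normal_density)

lemma base_trans_meas:
  assumes "0 < sig"
  shows "(\<lambda>(s, a). base_trans Lpi sig s a) \<in> borel \<Otimes>\<^sub>M borel \<rightarrow>\<^sub>M prob_algebra borel"
proof -
  have "(\<lambda>x. distr (density lborel (normal_density 0 sig)) borel (\<lambda>e. fst x + snd x / Lpi + e))
      \<in> borel \<Otimes>\<^sub>M borel \<rightarrow>\<^sub>M prob_algebra borel"
    apply (rule measurable_distr_prob_space2[where M=borel])
     apply (rule measurable_const[OF N0_prob[OF assms]])
    by measurable
  then show ?thesis by (simp add: base_trans_distr case_prod_beta)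
qed



lemma conv_nd:
  assumes "0 < t" "0 < s"
  shows "(\<integral>\<^sup>+y. ennreal (normal_density m t (x - y) * normal_density c s y) \<partial>lborel)
     = ennreal (normal_density (m + c) (sqrt (t\<^sup>2 + s\<^sup>2)) x)"
proof -
  have "(\<integral>\<^sup>+y. ennreal (normal_density m t (x - y) * normal_density c s y) \<partial>lborel)
      = (\<integral>\<^sup>+y. ennreal (normal_density m t (x - (c + 1 * y)) * normal_density c s (c + 1 * y)) \<partial>lborel)"
    using nn_integral_real_affine[of "\<lambda>y. ennreal (normal_density m t (x - y) * normal_density c s y)" 1 c] by simp
  also have "\<dots> = (\<integral>\<^sup>+y. ennreal (normal_density 0 t ((x - m - c) - y) * normal_density 0 s y) \<partial>lborel)"
    by (intro nn_integral_cong) (simp add: normal_density_def algebra_simps)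
  also have "\<dots> = ennreal (normal_density 0 (sqrt (t\<^sup>2 + s\<^sup>2)) (x - m - c))"
    using fun_cong[OF conv_normal_density_zero_mean[OF assms], of "x - m - c"] by simp
  also have "\<dots> = ennreal (normal_density (m + c) (sqrt (t\<^sup>2 + s\<^sup>2)) x)"
    by (simp add: normal_density_def algebra_simps)
  finally show ?thesis .
qed

lemma bind_normal_step:
  assumes "0 < sig" "0 < t"
  shows "bind (density lborel (normal_density m t)) (\<lambda>s'. base_trans Lpi sig s' c)
       = density lborel (normal_density (m + c / Lpi) (sqrt (t\<^sup>2 + sig\<^sup>2)))"
proof (rule measure_eqI)
  let ?M = "density lborel (normal_density m t)"
  let ?N = "density lborel (normal_density (c / Lpi) sig)"
  have K: "(\<lambda>s'. base_trans Lpi sig s' c) \<in> borel \<rightarrow>\<^sub>M prob_algebra borel"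
    using measurable_Pair_compose_split[OF base_trans_meas[OF assms(1)], of "\<lambda>x. x" borel "\<lambda>_. c"]
    by simp
  have K': "(\<lambda>s'. base_trans Lpi sig s' c) \<in> ?M \<rightarrow>\<^sub>M subprob_algebra borel"
    using measurable_prob_algebraD[OF K] by (simp cong: measurable_cong_sets)
  have ne: "space ?M \<noteq> {}" by simp
  show "sets (?M \<bind> (\<lambda>s'. base_trans Lpi sig s' c)) = sets (density lborel (normal_density (m + c / Lpi) (sqrt (t\<^sup>2 + sig\<^sup>2))))"
    by (subst sets_bind[OF _ ne]) (auto simp: base_trans_def)
  fix A assume "A \<in> sets (?M \<bind> (\<lambda>s'. base_trans Lpi sig s' c))"
  then have A[measurable]: "A \<in> sets borel"
    by (subst (asm) sets_bind[OF _ ne]) (auto simp: base_trans_def)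
  have "emeasure (?M \<bind> (\<lambda>s'. base_trans Lpi sig s' c)) A
      = \<integral>\<^sup>+x. emeasure (base_trans Lpi sig x c) A \<partial>?M"
    by (rule emeasure_bind[OF ne K']) simp
  also have "\<dots> = \<integral>\<^sup>+x. \<integral>\<^sup>+y. indicator A (x + y) \<partial>?N \<partial>?M"
  proof (intro nn_integral_cong)
    fix x
    have "base_trans Lpi sig x c = distr ?N borel (\<lambda>e. x + e)"
    proof -
      have e: "((+) x) \<circ> ((+) (c / Lpi)) = (\<lambda>e. x + c / Lpi + e)" by (auto simp: fun_eq_iff)
      have "distr ?N borel (\<lambda>e. x + e) = distr (distr (density lborel (normal_density 0 sig)) borel ((+) (c / Lpi))) borel ((+) x)"
        using density_normal_shift[of "c / Lpi" sig] by (simp add: comp_def)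
      also have "\<dots> = distr (density lborel (normal_density 0 sig)) borel (\<lambda>e. x + c / Lpi + e)"
        by (subst distr_distr) (auto simp: e)
      finally show ?thesis by (simp add: base_trans_distr)
    qed
    note eq = this
    have "emeasure (base_trans Lpi sig x c) A = \<integral>\<^sup>+y. indicator A y \<partial>(base_trans Lpi sig x c)"
      by (rule nn_integral_indicator[symmetric]) (simp add: base_trans_def)
    also have "\<dots> = \<integral>\<^sup>+y. indicator A y \<partial>(distr ?N borel (\<lambda>e. x + e))"
      by (simp only: eq)
    also have "\<dots> = \<integral>\<^sup>+y. indicator A (x + y) \<partial>?N"
      by (rule nn_integral_distr) auto
    finally show "emeasure (base_trans Lpi sig x c) A = \<integral>\<^sup>+y. indicator A (x + y) \<partial>?N" .
  qed
  also have "\<dots> = emeasure (?M \<star> ?N) A"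
    by (rule convolution_emeasure'[symmetric])
       (auto intro!: prob_space.finite_measure prob_space_normal_density assms)
  also have "?M \<star> ?N = density lborel (\<lambda>x. \<integral>\<^sup>+y. ennreal (normal_density m t (x - y)) * ennreal (normal_density (c / Lpi) sig y) \<partial>lborel)"
    by (rule convolution_density)
       (auto intro!: prob_space.finite_measure prob_space_normal_density assms)
  also have "\<dots> = density lborel (normal_density (m + c / Lpi) (sqrt (t\<^sup>2 + sig\<^sup>2)))"
    using conv_nd[OF assms(2,1)]
    by (simp add: ennreal_mult'[symmetric])
  finally show "emeasure (?M \<bind> (\<lambda>s'. base_trans Lpi sig s' c)) A = emeasure (density lborel (normal_density (m + c / Lpi) (sqrt (t\<^sup>2 + sig\<^sup>2)))) A" .
qed

lemma iter_trans_normal: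
  assumes "0 < sig" "0 < k"
  shows "iter_trans Lpi sig k as s = density lborel (normal_density (s + (\<Sum>i<k. as i) / Lpi) (sig * sqrt (real k)))"
  using assms(2)
proof (induction k)
  case 0 then show ?case by simp
next
  case (Suc k)
  show ?case
  proof (cases "k = 0")
    case True
    have K: "(\<lambda>s'. base_trans Lpi sig s' (as 0)) \<in> borel \<rightarrow>\<^sub>M subprob_algebra borel"
      using measurable_prob_algebraD[OF measurable_Pair_compose_split[OF base_trans_meas[OF assms(1)], of "\<lambda>x. x" borel "\<lambda>_. as 0"]]
      by simp
    show ?thesis using True by (simp add: bind_return[OF K]) (simp add: base_trans_def)
  next
    case False
    then have "0 < k" by simp
    have "iter_trans Lpi sig (Suc k) as s = bind (density lborel (normal_density (s + (\<Sum>i<k. as i) / Lpi) (sig * sqrt (real k)))) (\<lambda>s'. base_trans Lpi sig s' (as k))"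
      using Suc.IH[OF \<open>0 < k\<close>] by simp
    also have "\<dots> = density lborel (normal_density (s + (\<Sum>i<k. as i) / Lpi + as k / Lpi) (sqrt ((sig * sqrt (real k))\<^sup>2 + sig\<^sup>2)))"
      by (rule bind_normal_step) (use assms \<open>0 < k\<close> in auto)
    also have "s + (\<Sum>i<k. as i) / Lpi + as k / Lpi = s + (\<Sum>i<Suc k. as i) / Lpi"
      by (simp add: add_divide_distrib)
    also have "sqrt ((sig * sqrt (real k))\<^sup>2 + sig\<^sup>2) = sig * sqrt (real (Suc k))"
    proof -
      have "(sig * sqrt (real k))\<^sup>2 + sig\<^sup>2 = sig\<^sup>2 * real (Suc k)"
        by (simp add: power_mult_distrib algebra_simps)
      then show ?thesis using assms by (simp add: real_sqrt_mult)
    qed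
    finally show ?thesis .
  qed
qed



lemma nd_int_abs:
  assumes "0 < v"
  shows "integrable lborel (\<lambda>t. normal_density m v t * \<bar>t + u\<bar>)"
proof (rule Bochner_Integration.integrable_bound[where f="\<lambda>t. normal_density m v t * \<bar>t - m\<bar> ^ 1 + \<bar>m + u\<bar> * normal_density m v t"])
  show "integrable lborel (\<lambda>t. normal_density m v t * \<bar>t - m\<bar> ^ 1 + \<bar>m + u\<bar> * normal_density m v t)"
    using assms by (intro Bochner_Integration.integrable_add integrable_normal_moment_abs Bochner_Integration.integrable_mult_right integrable_normal_density) auto
  show "AE x in lborel. norm (normal_density m v x * \<bar>x + u\<bar>) \<le> norm (normal_density m v x * \<bar>x - m\<bar> ^ 1 + \<bar>m + u\<bar> * normal_density m v x)"
  proof (intro AE_I2)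
    fix x
    have n: "0 \<le> normal_density m v x" by simp
    have "normal_density m v x * \<bar>x + u\<bar> \<le> normal_density m v x * (\<bar>x - m\<bar> + \<bar>m + u\<bar>)"
      by (rule mult_left_mono[OF _ n]) linarith
    then show "norm (normal_density m v x * \<bar>x + u\<bar>) \<le> norm (normal_density m v x * \<bar>x - m\<bar> ^ 1 + \<bar>m + u\<bar> * normal_density m v x)"
      using n by (simp add: abs_mult algebra_simps)
  qed
qed simp

definition J :: "real \<Rightarrow> real \<Rightarrow> real" where
  "J v u = (\<integral>t. normal_density 0 v t * \<bar>t + u\<bar> \<partial>lborel)"

lemma J_shift: "(\<integral>s. normal_density m v s * \<bar>s + w\<bar> \<partial>lborel) = J v (m + w)"
proof -
  have "(\<integral>s. normal_density m v s * \<bar>s + w\<bar> \<partial>lborel) = \<bar>1\<bar> *\<^sub>R (\<integral>s. normal_density m v (m + 1 * s) * \<bar>(m + 1 * s) + w\<bar> \<partial>lborel)"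
    by (rule lborel_integral_real_affine) simp
  also have "\<dots> = J v (m + w)"
    unfolding J_def by simp (rule Bochner_Integration.integral_cong, simp_all add: normal_density_def algebra_simps)
  finally show ?thesis .
qed

lemma J_refl: "J v u = (\<integral>t. normal_density 0 v t * \<bar>u - t\<bar> \<partial>lborel)"
proof -
  have "J v u = \<bar>-1\<bar> *\<^sub>R (\<integral>t. normal_density 0 v (0 + -1 * t) * \<bar>(0 + -1 * t) + u\<bar> \<partial>lborel)"
    unfolding J_def by (rule lborel_integral_real_affine) simp
  also have "\<dots> = (\<integral>t. normal_density 0 v t * \<bar>u - t\<bar> \<partial>lborel)"
    by simp (rule Bochner_Integration.integral_cong, simp_all add: normal_density_def algebra_simps)
  finally show ?thesis .
qed

lemma J0: assumes "0 < v" shows "J v 0 = v * sqrt (2 / pi)"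
proof -
  have "(\<integral>x. normal_density 0 v x * \<bar>x - 0\<bar> ^ (2 * 0 + 1) \<partial>lborel) = 2 ^ 0 * v ^ (2 * 0 + 1) * fact 0 * sqrt (2 / pi)"
    by (rule integral_normal_moment_abs_odd) (rule assms)
  then show ?thesis using assms by (simp add: J_def)
qed

lemma J_ge:
  assumes "0 < v"
  shows "v * sqrt (2 / pi) \<le> J v u"
proof -
  have i1: "integrable lborel (\<lambda>t. normal_density 0 v t * \<bar>t + u\<bar>)" using nd_int_abs[OF assms] .
  have i2: "integrable lborel (\<lambda>t. normal_density 0 v t * \<bar>u - t\<bar>)"
    using nd_int_abs[OF assms, of 0 "-u"] by (simp add: abs_minus_commute)
  have i0: "integrable lborel (\<lambda>t. normal_density 0 v t * \<bar>t + 0\<bar>)" using nd_int_abs[OF assms] .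
  have "2 * J v 0 = (\<integral>t. 2 * (normal_density 0 v t * \<bar>t + 0\<bar>) \<partial>lborel)"
    unfolding J_def by simp
  also have "\<dots> \<le> (\<integral>t. normal_density 0 v t * \<bar>t + u\<bar> + normal_density 0 v t * \<bar>u - t\<bar> \<partial>lborel)"
  proof (rule integral_mono)
    show "integrable lborel (\<lambda>t. 2 * (normal_density 0 v t * \<bar>t + 0\<bar>))" using i0 by simp
    show "integrable lborel (\<lambda>t. normal_density 0 v t * \<bar>t + u\<bar> + normal_density 0 v t * \<bar>u - t\<bar>)"
      using i1 i2 by simp
    fix t
    have n: "0 \<le> normal_density 0 v t" by simp
    have "normal_density 0 v t * (2 * \<bar>t\<bar>) \<le> normal_density 0 v t * (\<bar>t + u\<bar> + \<bar>u - t\<bar>)"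
      by (rule mult_left_mono[OF _ n]) linarith
    then show "2 * (normal_density 0 v t * \<bar>t + 0\<bar>) \<le> normal_density 0 v t * \<bar>t + u\<bar> + normal_density 0 v t * \<bar>u - t\<bar>"
      by (simp add: algebra_simps)
  qed
  also have "\<dots> = J v u + J v u"
    using i1 i2 by (simp add: J_def J_refl[of v u, symmetric])
  finally show ?thesis using J0[OF assms] by simp
qed



definition Cst :: "real \<Rightarrow> real \<Rightarrow> real \<Rightarrow> nat \<Rightarrow> real" where
  "Cst Lpi LQ sig d = LQ * Lpi * (sig * sqrt (real d) * sqrt (2 / pi))"

definition optA :: "real \<Rightarrow> nat \<Rightarrow> aug_state \<Rightarrow> real" where
  "optA Lpi d y = - Lpi * (fst y + (\<Sum>i<d. snd y i) / Lpi)"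

lemma cd_reward_J:
  assumes "0 < sig" "0 < d"
  shows "- cd_reward Lpi LQ sig d y a = LQ * Lpi * J (sig * sqrt (real d)) (fst y + (\<Sum>i<d. snd y i) / Lpi + a / Lpi)"
proof -
  let ?m = "fst y + (\<Sum>i<d. snd y i) / Lpi" and ?v = "sig * sqrt (real d)"
  have "cd_reward Lpi LQ sig d y a = integral\<^sup>L (density lborel (normal_density ?m ?v)) (\<lambda>s. base_reward Lpi LQ s a)"
    unfolding cd_reward_def using iter_trans_normal[OF assms] by simp
  also have "\<dots> = (\<integral>s. normal_density ?m ?v s *\<^sub>R base_reward Lpi LQ s a \<partial>lborel)"
    by (rule integral_density) (auto simp: base_reward_def)
  also have "\<dots> = (\<integral>s. - (LQ * Lpi) * (normal_density ?m ?v s * \<bar>s + a / Lpi\<bar>) \<partial>lborel)"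
    by (rule Bochner_Integration.integral_cong) (auto simp: base_reward_def)
  also have "\<dots> = - (LQ * Lpi) * (\<integral>s. normal_density ?m ?v s * \<bar>s + a / Lpi\<bar> \<partial>lborel)"
    by (rule integral_mult_right_zero)
  also have "(\<integral>s. normal_density ?m ?v s * \<bar>s + a / Lpi\<bar> \<partial>lborel) = J ?v (?m + a / Lpi)"
    by (rule J_shift)
  finally show ?thesis by simp
qed

lemma reward_ge:
  assumes "0 < Lpi" "0 < LQ" "0 < sig"
  shows "Cst Lpi LQ sig d \<le> - cd_reward Lpi LQ sig d y a"
proof (cases "d = 0")
  case True
  then have "- cd_reward Lpi LQ sig d y a = LQ * Lpi * \<bar>fst y + a / Lpi\<bar>"
    by (simp add: cd_reward_def base_reward_def integral_return)
  then show ?thesis using True assms by (simp add: Cst_def)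
next
  case False
  have v: "0 < sig * sqrt (real d)" using False assms by simp
  show ?thesis
    using cd_reward_J[OF assms(3), where d=d and LQ=LQ and Lpi=Lpi and y=y and a=a] Cst_def False J_ge[OF v] assms
    by (simp add: mult_left_mono)
qed

lemma reward_opt:
  assumes "0 < Lpi" "0 < LQ" "0 < sig"
  shows "- cd_reward Lpi LQ sig d y (optA Lpi d y) = Cst Lpi LQ sig d"
proof (cases "d = 0")
  case True
  then show ?thesis using assms
    by (simp add: cd_reward_def base_reward_def integral_return Cst_def optA_def)
next
  case False
  have v: "0 < sig * sqrt (real d)" using False assms by simp
  have z: "fst y + (\<Sum>i<d. snd y i) / Lpi + optA Lpi d y / Lpi = 0"
    using assms by (simp add: optA_def)
  show ?thesis
    using cd_reward_J[OF assms(3), where d=d and LQ=LQ and Lpi=Lpi and y=y and a="optA Lpi d y"] Cst_def False z J0[OF v] by simp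
qed



definition shiftf :: "nat \<Rightarrow> aug_state \<Rightarrow> real \<Rightarrow> nat \<Rightarrow> real" where
  "shiftf d y a = (\<lambda>i. if Suc i < d then snd y (Suc i) else if Suc i = d then a else undefined)"

lemma shiftf_meas:
  "(\<lambda>z. shiftf d (fst z) (snd z)) \<in> aug_space d \<Otimes>\<^sub>M borel \<rightarrow>\<^sub>M PiM {..<d} (\<lambda>_. (borel :: real measure))"
proof -
  have "(\<lambda>z i. (\<lambda>i z. shiftf d (fst z) (snd z) i) i z) \<in> aug_space d \<Otimes>\<^sub>M borel \<rightarrow>\<^sub>M PiM {..<d} (\<lambda>_. (borel :: real measure))"
  proof (rule measurable_PiM_single')
    fix i assume i: "i \<in> {..<d}"
    show "(\<lambda>z. shiftf d (fst z) (snd z) i) \<in> aug_space d \<Otimes>\<^sub>M borel \<rightarrow>\<^sub>M borel"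
    proof (cases "Suc i < d")
      case True
      then have "(\<lambda>z. shiftf d (fst z) (snd z) i) = (\<lambda>z. snd (fst z) (Suc i))" by (auto simp: shiftf_def)
      moreover have "(\<lambda>z. snd (fst z) (Suc i)) \<in> aug_space d \<Otimes>\<^sub>M borel \<rightarrow>\<^sub>M borel"
        unfolding aug_space_def apply measurable using True by simp
      ultimately show ?thesis by simp
    next
      case False
      then have "(\<lambda>z. shiftf d (fst z) (snd z) i) = (\<lambda>z. snd z)" using i by (auto simp: shiftf_def)
      moreover have "(\<lambda>z. snd z) \<in> aug_space d \<Otimes>\<^sub>M borel \<rightarrow>\<^sub>M borel" by measurable
      ultimately show ?thesis by simp
    qed
  next
    show "(\<lambda>z i. shiftf d (fst z) (snd z) i) \<in> space (aug_space d \<Otimes>\<^sub>M borel) \<rightarrow> (\<Pi>\<^sub>E i\<in>{..<d}. space borel)"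
      by (auto simp: shiftf_def PiE_def extensional_def)
  qed
  then show ?thesis by simp
qed

lemma cd_trans_alt:
  "cd_trans Lpi sig d y a = distr (base_trans Lpi sig (fst y) (if d = 0 then a else snd y 0)) (aug_space d) (\<lambda>s'. (s', shiftf d y a))"
  unfolding cd_trans_def shiftf_def by simp

lemma cd_trans_meas:
  assumes "0 < sig"
  shows "(\<lambda>(y, a). cd_trans Lpi sig d y a) \<in> aug_space d \<Otimes>\<^sub>M borel \<rightarrow>\<^sub>M prob_algebra (aug_space d)"
proof -
  have g: "(\<lambda>z. base_trans Lpi sig (fst (fst z)) (if d = 0 then snd z else snd (fst z) 0)) \<in> aug_space d \<Otimes>\<^sub>M borel \<rightarrow>\<^sub>M prob_algebra borel"
  proof -
    have h: "(\<lambda>z. (fst (fst z), if d = 0 then snd z else snd (fst z) 0)) \<in> aug_space d \<Otimes>\<^sub>M borel \<rightarrow>\<^sub>M borel \<Otimes>\<^sub>M borel"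
    proof (cases "d = 0")
      case True then show ?thesis unfolding aug_space_def by simp measurable
    next
      case False then have "0 \<in> {..<d}" by simp
      with False show ?thesis unfolding aug_space_def by simp measurable
    qed
    show ?thesis using measurable_comp[OF h base_trans_meas[OF assms, of Lpi]] by (simp add: comp_def)
  qed
  have f: "(\<lambda>(z, s'). (s', shiftf d (fst z) (snd z))) \<in> (aug_space d \<Otimes>\<^sub>M borel) \<Otimes>\<^sub>M borel \<rightarrow>\<^sub>M aug_space d"
  proof -
    have "(\<lambda>w. (snd w, shiftf d (fst (fst w)) (snd (fst w)))) \<in> (aug_space d \<Otimes>\<^sub>M borel) \<Otimes>\<^sub>M borel \<rightarrow>\<^sub>M borel \<Otimes>\<^sub>M PiM {..<d} (\<lambda>_. (borel :: real measure))"
      using shiftf_meas[of d] by measurable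
    then show ?thesis by (simp add: aug_space_def case_prod_unfold)
  qed
  have "(\<lambda>z. distr (base_trans Lpi sig (fst (fst z)) (if d = 0 then snd z else snd (fst z) 0)) (aug_space d) (\<lambda>s'. (s', shiftf d (fst z) (snd z))))
       \<in> aug_space d \<Otimes>\<^sub>M borel \<rightarrow>\<^sub>M prob_algebra (aug_space d)"
    by (rule measurable_distr_prob_space2[OF g]) (use f in simp)
  then show ?thesis by (simp add: cd_trans_alt case_prod_beta)
qed

lemma cd_marg_prob:
  assumes "0 < sig" "p \<in> cd_policies d" "x \<in> space (aug_space d)"
  shows "cd_marg Lpi sig d p x t \<in> space (prob_algebra (aug_space d))"
proof (induction t)
  case 0
  show ?case using measurable_space[OF measurable_return_prob_space assms(3)] by simp
next
  case (Suc t)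
  have p: "p \<in> aug_space d \<rightarrow>\<^sub>M prob_algebra borel" using assms(2) by (simp add: cd_policies_def)
  have K: "(\<lambda>y. bind (p y) (\<lambda>a. cd_trans Lpi sig d y a)) \<in> aug_space d \<rightarrow>\<^sub>M prob_algebra (aug_space d)"
    by (rule measurable_bind_prob_space2[OF p]) (rule cd_trans_meas[OF assms(1)])
  have "(\<lambda>_::unit. bind (cd_marg Lpi sig d p x t) (\<lambda>y. bind (p y) (\<lambda>a. cd_trans Lpi sig d y a))) \<in> count_space UNIV \<rightarrow>\<^sub>M prob_algebra (aug_space d)"
    by (rule measurable_bind_prob_space[OF measurable_const[OF Suc.IH] K])
  from measurable_space[OF this, of "()"] show ?case by simp
qed



lemma prob_kernel_at:
  assumes "p \<in> cd_policies d" "y \<in> space (aug_space d)"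
  shows "prob_space (p y)"
  using measurable_space[of p "aug_space d" "prob_algebra borel" y] assms
  by (auto simp: cd_policies_def space_prob_algebra)

lemma Cst_nonneg: "0 < Lpi \<Longrightarrow> 0 < LQ \<Longrightarrow> 0 < sig \<Longrightarrow> 0 \<le> Cst Lpi LQ sig d"
  by (simp add: Cst_def)

lemma const_int_prob:
  assumes "M \<in> space (prob_algebra N)"
  shows "(\<integral>\<^sup>+ y. c \<partial>M) = c"
  using assms by (auto simp: space_prob_algebra prob_space.emeasure_space_1)

lemma space_marg:
  assumes "M \<in> space (prob_algebra N)" shows "space M = space N"
  using assms by (simp add: space_prob_algebra) (metis sets_eq_imp_space_eq)

lemma term_ge:
  assumes pos: "0 < Lpi" "0 < LQ" "0 < sig" and p: "p \<in> cd_policies d" and x: "x \<in> space (aug_space d)"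
  shows "ennreal (Cst Lpi LQ sig d) \<le> (\<integral>\<^sup>+ y. \<integral>\<^sup>+ a. ennreal (- cd_reward Lpi LQ sig d y a) \<partial>(p y) \<partial>(cd_marg Lpi sig d p x t))"
proof -
  let ?M = "cd_marg Lpi sig d p x t"
  have M: "?M \<in> space (prob_algebra (aug_space d))" by (rule cd_marg_prob[OF pos(3) p x])
  have "ennreal (Cst Lpi LQ sig d) = (\<integral>\<^sup>+ y. ennreal (Cst Lpi LQ sig d) \<partial>?M)"
    by (rule const_int_prob[OF M, symmetric])
  also have "\<dots> \<le> (\<integral>\<^sup>+ y. \<integral>\<^sup>+ a. ennreal (- cd_reward Lpi LQ sig d y a) \<partial>(p y) \<partial>?M)"
  proof (rule nn_integral_mono)
    fix y assume "y \<in> space ?M"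
    then have y: "y \<in> space (aug_space d)" using space_marg[OF M] by simp
    interpret P: prob_space "p y" by (rule prob_kernel_at[OF p y])
    have "ennreal (Cst Lpi LQ sig d) = (\<integral>\<^sup>+ a. ennreal (Cst Lpi LQ sig d) \<partial>(p y))"
      by (simp add: P.emeasure_space_1)
    also have "\<dots> \<le> (\<integral>\<^sup>+ a. ennreal (- cd_reward Lpi LQ sig d y a) \<partial>(p y))"
      by (rule nn_integral_mono) (simp add: ennreal_leI reward_ge[OF pos])
    finally show "ennreal (Cst Lpi LQ sig d) \<le> (\<integral>\<^sup>+ a. ennreal (- cd_reward Lpi LQ sig d y a) \<partial>(p y))" .
  qed
  finally show ?thesis .
qed

definition optP :: "real \<Rightarrow> nat \<Rightarrow> aug_state \<Rightarrow> real measure" where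
  "optP Lpi d y = return borel (optA Lpi d y)"

lemma optA_meas: "optA Lpi d \<in> aug_space d \<rightarrow>\<^sub>M borel"
proof -
  have "(\<lambda>y. \<Sum>i<d. snd y i) \<in> aug_space d \<rightarrow>\<^sub>M borel"
  proof (rule borel_measurable_sum)
    fix i assume "i \<in> {..<d}"
    then show "(\<lambda>y. snd y i) \<in> aug_space d \<rightarrow>\<^sub>M borel"
      unfolding aug_space_def by measurable
  qed
  then show ?thesis unfolding optA_def aug_space_def by measurable
qed

lemma optP_policy: "optP Lpi d \<in> cd_policies d"
  unfolding cd_policies_def optP_def
  using measurable_comp[OF optA_meas measurable_return_prob_space] by (simp add: comp_def)

lemma term_opt:
  assumes pos: "0 < Lpi" "0 < LQ" "0 < sig" and x: "x \<in> space (aug_space d)"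
  shows "(\<integral>\<^sup>+ y. \<integral>\<^sup>+ a. ennreal (- cd_reward Lpi LQ sig d y a) \<partial>(optP Lpi d y) \<partial>(cd_marg Lpi sig d (optP Lpi d) x t))
     = ennreal (Cst Lpi LQ sig d)"
proof -
  let ?M = "cd_marg Lpi sig d (optP Lpi d) x t"
  have M: "?M \<in> space (prob_algebra (aug_space d))" by (rule cd_marg_prob[OF pos(3) optP_policy x])
  have inner: "(\<integral>\<^sup>+ a. ennreal (- cd_reward Lpi LQ sig d y a) \<partial>(optP Lpi d y)) = ennreal (Cst Lpi LQ sig d)" for y
  proof (rule antisym)
    let ?c = "optA Lpi d y"
    let ?g = "\<lambda>a. if a = ?c then ennreal (Cst Lpi LQ sig d) else top"
    have "(\<integral>\<^sup>+ a. ennreal (- cd_reward Lpi LQ sig d y a) \<partial>(optP Lpi d y)) \<le> (\<integral>\<^sup>+ a. ?g a \<partial>(optP Lpi d y))"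
      by (rule nn_integral_mono) (auto simp: reward_opt[OF pos])
    also have "\<dots> = ?g ?c" unfolding optP_def
      by (rule nn_integral_return) auto
    finally show "(\<integral>\<^sup>+ a. ennreal (- cd_reward Lpi LQ sig d y a) \<partial>(optP Lpi d y)) \<le> ennreal (Cst Lpi LQ sig d)" by simp
    have "ennreal (Cst Lpi LQ sig d) = (\<integral>\<^sup>+ a. ennreal (Cst Lpi LQ sig d) \<partial>(optP Lpi d y))"
      by (simp add: optP_def)
    also have "\<dots> \<le> (\<integral>\<^sup>+ a. ennreal (- cd_reward Lpi LQ sig d y a) \<partial>(optP Lpi d y))"
      by (rule nn_integral_mono) (simp add: ennreal_leI reward_ge[OF pos])
    finally show "ennreal (Cst Lpi LQ sig d) \<le> (\<integral>\<^sup>+ a. ennreal (- cd_reward Lpi LQ sig d y a) \<partial>(optP Lpi d y))" .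
  qed
  have "(\<integral>\<^sup>+ y. \<integral>\<^sup>+ a. ennreal (- cd_reward Lpi LQ sig d y a) \<partial>(optP Lpi d y) \<partial>?M) = (\<integral>\<^sup>+ y. ennreal (Cst Lpi LQ sig d) \<partial>?M)"
    by (simp only: inner)
  also have "\<dots> = ennreal (Cst Lpi LQ sig d)" by (rule const_int_prob[OF M])
  finally show ?thesis .
qed



lemma geom_sum:
  assumes "0 < gamma" "gamma < 1" "0 \<le> K"
  shows "(\<Sum>t. ennreal (gamma ^ t) * ennreal K) = ennreal (K / (1 - gamma))"
proof -
  have s: "summable (\<lambda>t. gamma ^ t * K)"
    using assms by (intro summable_mult2 summable_geometric) simp
  have "(\<Sum>t. gamma ^ t * K) = (\<Sum>t. gamma ^ t) * K"
    using assms by (intro suminf_mult2[symmetric] summable_geometric) simp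
  also have "\<dots> = K / (1 - gamma)"
    using assms by (simp add: suminf_geometric)
  finally have e: "(\<Sum>t. gamma ^ t * K) = K / (1 - gamma)" .
  have "(\<Sum>t. ennreal (gamma ^ t) * ennreal K) = (\<Sum>t. ennreal (gamma ^ t * K))"
    using assms by (simp add: ennreal_mult)
  also have "\<dots> = ennreal (\<Sum>t. gamma ^ t * K)"
    using assms s by (intro suminf_ennreal2) auto
  finally show ?thesis using e by simp
qed

lemma value_le:
  assumes pos: "0 < Lpi" "0 < LQ" "0 < sig" "0 < gamma" "gamma < 1"
    and p: "p \<in> cd_policies d" and x: "x \<in> space (aug_space d)"
  shows "cd_value Lpi LQ sig gamma d p x \<le> - ereal (Cst Lpi LQ sig d / (1 - gamma))"
proof -
  have K: "0 \<le> Cst Lpi LQ sig d" using pos by (simp add: Cst_def)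
  have "ennreal (Cst Lpi LQ sig d / (1 - gamma)) = (\<Sum>t. ennreal (gamma ^ t) * ennreal (Cst Lpi LQ sig d))"
    using geom_sum[OF pos(4,5) K] by simp
  also have "\<dots> \<le> (\<Sum>t. ennreal (gamma ^ t) *
         (\<integral>\<^sup>+ y. \<integral>\<^sup>+ a. ennreal (- cd_reward Lpi LQ sig d y a) \<partial>(p y) \<partial>(cd_marg Lpi sig d p x t)))"
    by (intro suminf_le mult_left_mono term_ge[OF pos(1-3) p x]) auto
  finally have le: "ennreal (Cst Lpi LQ sig d / (1 - gamma)) \<le> (\<Sum>t. ennreal (gamma ^ t) *
         (\<integral>\<^sup>+ y. \<integral>\<^sup>+ a. ennreal (- cd_reward Lpi LQ sig d y a) \<partial>(p y) \<partial>(cd_marg Lpi sig d p x t)))" .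
  have nn: "0 \<le> Cst Lpi LQ sig d / (1 - gamma)" using K pos by simp
  have "ereal (Cst Lpi LQ sig d / (1 - gamma)) \<le> enn2ereal (\<Sum>t. ennreal (gamma ^ t) *
         (\<integral>\<^sup>+ y. \<integral>\<^sup>+ a. ennreal (- cd_reward Lpi LQ sig d y a) \<partial>(p y) \<partial>(cd_marg Lpi sig d p x t)))"
    proof -
    have "enn2ereal (ennreal (Cst Lpi LQ sig d / (1 - gamma))) \<le> enn2ereal (\<Sum>t. ennreal (gamma ^ t) *
         (\<integral>\<^sup>+ y. \<integral>\<^sup>+ a. ennreal (- cd_reward Lpi LQ sig d y a) \<partial>(p y) \<partial>(cd_marg Lpi sig d p x t)))"
      using le by (simp only: less_eq_ennreal.rep_eq)
    then show ?thesis using nn by simp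
  qed
  then have "- enn2ereal (\<Sum>t. ennreal (gamma ^ t) *
         (\<integral>\<^sup>+ y. \<integral>\<^sup>+ a. ennreal (- cd_reward Lpi LQ sig d y a) \<partial>(p y) \<partial>(cd_marg Lpi sig d p x t))) \<le> - ereal (Cst Lpi LQ sig d / (1 - gamma))"
    by (simp only: ereal_minus_le_minus)
  then show ?thesis unfolding cd_value_def .
qed

lemma value_opt:
  assumes pos: "0 < Lpi" "0 < LQ" "0 < sig" "0 < gamma" "gamma < 1"
    and x: "x \<in> space (aug_space d)"
  shows "cd_value Lpi LQ sig gamma d (optP Lpi d) x = - ereal (Cst Lpi LQ sig d / (1 - gamma))"
proof -
  have K: "0 \<le> Cst Lpi LQ sig d" using pos by (simp add: Cst_def)
  have nn: "0 \<le> Cst Lpi LQ sig d / (1 - gamma)" using K pos by simp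
  show ?thesis
    unfolding cd_value_def term_opt[OF pos(1-3) x] geom_sum[OF pos(4,5) K]
    using nn by simp
qed

lemma opt_value:
  assumes pos: "0 < Lpi" "0 < LQ" "0 < sig" "0 < gamma" "gamma < 1"
    and x: "x \<in> space (aug_space d)"
  shows "cd_opt_value Lpi LQ sig gamma d x = - ereal (Cst Lpi LQ sig d / (1 - gamma))"
  unfolding cd_opt_value_def
proof (rule antisym)
  show "(SUP p\<in>cd_policies d. cd_value Lpi LQ sig gamma d p x) \<le> - ereal (Cst Lpi LQ sig d / (1 - gamma))"
    by (rule SUP_least) (rule value_le[OF pos _ x])
  show "- ereal (Cst Lpi LQ sig d / (1 - gamma)) \<le> (SUP p\<in>cd_policies d. cd_value Lpi LQ sig gamma d p x)"
    using SUP_upper[OF optP_policy, of "\<lambda>p. cd_value Lpi LQ sig gamma d p x" Lpi d] value_opt[OF pos x] by simp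
qed

theorem mainTheorem9:
  fixes Lpi LQ sig gamma :: real and D Dt :: nat and x :: aug_state
  assumes "Lpi > 0" and "LQ > 0" and "sig > 0"
    and "0 < gamma" and "gamma < 1"
    and "Dt < D"
    and "x \<in> space (aug_space D)"
  shows "exp_nonpos (delayed_belief Lpi sig D Dt x) (cd_opt_value Lpi LQ sig gamma Dt)
           - cd_opt_value Lpi LQ sig gamma D x
         = ereal (LQ * Lpi / (1 - gamma) * sig * sqrt (2 / pi) * (sqrt (real D) - sqrt (real Dt)))"
proof -
  note pos = assms(1-5)
  let ?B = "delayed_belief Lpi sig D Dt x"
  let ?ct = "Cst Lpi LQ sig Dt / (1 - gamma)"
  let ?cD = "Cst Lpi LQ sig D / (1 - gamma)"
  have nt: "0 \<le> ?ct" using pos by (simp add: Cst_def)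
  have ps: "prob_space (iter_trans Lpi sig (D - Dt) (snd x) (fst x))"
    using iter_trans_normal[OF assms(3), of "D - Dt" Lpi "snd x" "fst x"] assms(3,6)
    by (simp add: prob_space_normal_density)
  have fm: "(\<lambda>s'. (s', \<lambda>i. if i < Dt then snd x (i + (D - Dt)) else undefined)) \<in> borel \<rightarrow>\<^sub>M aug_space Dt"
  proof -
    have c: "(\<lambda>i. if i < Dt then snd x (i + (D - Dt)) else undefined) \<in> space (PiM {..<Dt} (\<lambda>_. (borel :: real measure)))"
      by (auto simp: space_PiM PiE_def extensional_def)
    show ?thesis unfolding aug_space_def
      by (rule measurable_Pair[OF measurable_ident_sets[OF refl] measurable_const[OF c]])
  qed
  have sets_it: "sets (iter_trans Lpi sig (D - Dt) (snd x) (fst x)) = sets borel"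
    using iter_trans_normal[OF assms(3), of "D - Dt" Lpi "snd x" "fst x"] assms(6) by simp
  have fm': "(\<lambda>s'. (s', \<lambda>i. if i < Dt then snd x (i + (D - Dt)) else undefined)) \<in> iter_trans Lpi sig (D - Dt) (snd x) (fst x) \<rightarrow>\<^sub>M aug_space Dt"
    using fm by (simp cong: measurable_cong_sets add: sets_it)
  have pB: "prob_space ?B"
    unfolding delayed_belief_def by (rule prob_space.prob_space_distr[OF ps fm'])
  have spB: "space ?B = space (aug_space Dt)" by (simp add: delayed_belief_def)
  have "(\<integral>\<^sup>+ y. e2ennreal (- cd_opt_value Lpi LQ sig gamma Dt y) \<partial>?B) = (\<integral>\<^sup>+ y. ennreal ?ct \<partial>?B)"
    by (rule nn_integral_cong) (simp add: spB opt_value[OF pos])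
  also have "\<dots> = ennreal ?ct" using pB by (simp add: prob_space.emeasure_space_1)
  finally have E: "exp_nonpos ?B (cd_opt_value Lpi LQ sig gamma Dt) = - ereal ?ct"
    unfolding exp_nonpos_def using nt by simp
  have "exp_nonpos ?B (cd_opt_value Lpi LQ sig gamma Dt) - cd_opt_value Lpi LQ sig gamma D x
      = ereal (?cD - ?ct)"
    unfolding E opt_value[OF pos assms(7)] by simp
  also have "?cD - ?ct = (Cst Lpi LQ sig D - Cst Lpi LQ sig Dt) / (1 - gamma)"
    by (simp add: diff_divide_distrib)
  also have "Cst Lpi LQ sig D - Cst Lpi LQ sig Dt = LQ * Lpi * sig * sqrt (2 / pi) * (sqrt (real D) - sqrt (real Dt))"
    unfolding Cst_def by (simp add: algebra_simps)
  also have "(LQ * Lpi * sig * sqrt (2 / pi) * (sqrt (real D) - sqrt (real Dt))) / (1 - gamma) = LQ * Lpi / (1 - gamma) * sig * sqrt (2 / pi) * (sqrt (real D) - sqrt (real Dt))"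
    by simp
  finally show ?thesis .
qed


end
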